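(* Let $n\ge 2$ and $1\le r\le n-1$ be integers. For every integer $m\ge 1$ define on $[-1,1]$ \[ \mathcal{T}_m(x)=\frac{\sqrt{1-x^2}\,T_m'(x)}{m^2}, \] where $T_m(x)=\cos(m\cos^{-1}x)$ is the Chebyshev polynomial of the first kind of degree $m$. For a sign vector $\varepsilon=(\varepsilon_1,\dots,\varepsilon_r)\in\{-1,+1\}^r$ put $m_0=n$, $m_i=m_{i-1}+\varepsilon_i$ for $1\le i\le r$, and \[ \beta_{n,r}(\varepsilon)=\prod_{i=1}^{r}2m_{i-1}. \] Enumerate the $2^r$ sign vectors as $\varepsilon^{(1)},\dots,\varepsilon^{(2^r)}$ in lexicographic order with $-1<+1$ (with $\varepsilon_1$ the most significant entry), and write $\beta^j_{n,r}=\beta_{n,r}(\varepsilon^{(j)})$. Then for all $x\in(-1,1)$, \[ \mathcal{T}_n(x)=\frac{d^r}{dx^r}\left(\sum_{j=1}^{2^r}\Big(\prod_{i=1}^r\varepsilon^{(j)}_i\Big)\frac{\mathcal{T}_{\,n+\varepsilon^{(j)}_1+\cdots+\varepsilon^{(j)}_r}(x)}{\beta^j_{n,r}}\right), \] i.e. $\mathcal{T}_n=\Big(\frac{(-1)^r\mathcal{T}_{n-r}}{\beta^1_{n,r}}+\frac{(-1)^{r-1}\mathcal{T}_{n-r+2}}{\beta^2_{n,r}}+\cdots-\frac{\mathcal{T}_{n+r-2}}{\beta^{2^r-1}_{n,r}}+\frac{\mathcal{T}_{n+r}}{\beta^{2^r}_{n,r}}\Big)^{(r)}$. Moreover \[ \beta^1_{n,r}=\beta^2_{n,r}=\prod_{i=1}^{r}(2n-2i+2),\qquad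 \beta^{2^r-1}_{n,r}=\beta^{2^r}_{n,r}=\prod_{i=1}^{r}(2n+2i-2), \] and for every $1\le j\le 2^{r-1}$, \[ \beta^1_{n,r}=\beta^2_{n,r}\le \beta^{2j-1}_{n,r}=\beta^{2j}_{n,r}\le\beta^{2^r-1}_{n,r}=\beta^{2^r}_{n,r}. \]
   Context: $T_m(x)=\cos(m\cos^{-1}x)$ denotes the Chebyshev polynomial of the first kind; $\mathcal{T}_m$ is the scaled quantity defined in the claim. The superscript $(r)$ denotes the $r$-th derivative with respect to $x$. *)

theory Defs
  imports "HOL-Analysis.Analysis" "HOL-Library.List_Lexorder"
begin

definition cheb :: "nat \<Rightarrow> real \<Rightarrow> real" where
  "cheb m x = cos (real m * arccos x)"

definition chebS :: "nat \<Rightarrow> real \<Rightarrow> real" where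
  "chebS m x = sqrt (1 - x^2) * deriv (cheb m) x / (real m)^2"

text \<open>Sign vectors of length r, as integer lists with entries in {-1,1}
  (entry k of the list is epsilon_(k+1)).\<close>
definition signvecs :: "nat \<Rightarrow> int list set" where
  "signvecs r = {xs. length xs = r \<and> set xs \<subseteq> {-1, 1}}"

definition sv :: "nat \<Rightarrow> nat \<Rightarrow> int list" where
  "sv r j = sorted_list_of_set (signvecs r) ! (j - 1)"

definition mseq :: "nat \<Rightarrow> int list \<Rightarrow> nat \<Rightarrow> int" where
  "mseq n eps i = int n + (\<Sum>k<i. eps ! k)"

definition beta :: "nat \<Rightarrow> int list \<Rightarrow> real" where
  "beta n eps = (\<Prod>i=1..length eps. 2 * of_int (mseq n eps (i - 1)))"

end

theory Submission imports Defs begin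
fun Lr :: "nat \<Rightarrow> int list list" where
  "Lr 0 = [[]]"
| "Lr (Suc r) = map (\<lambda>k. Lr r ! (k div 2) @ [if even k then -1 else 1]) [0..<2 * length (Lr r)]"

lemma Lr_len: "length (Lr r) = 2^r"
  by (induction r) auto

lemma Lr_nth: "k < 2^Suc r \<Longrightarrow> Lr (Suc r) ! k = Lr r ! (k div 2) @ [if even k then -1 else 1]"
  by (simp add: Lr_len)

declare Lr.simps(2)[simp del]

lemma signvecs_Suc: "signvecs (Suc r) = {xs @ [e] | xs e. xs \<in> signvecs r \<and> e \<in> {-1,1}}"
  unfolding signvecs_def by (auto simp: length_Suc_conv_rev)

lemma Lr_set: "set (Lr r) = signvecs r"
proof (induction r)
  case 0 then show ?case by (auto simp: signvecs_def)
next
  case (Suc r)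
  show ?case
  proof
    show "set (Lr (Suc r)) \<subseteq> signvecs (Suc r)"
    proof
      fix ys assume "ys \<in> set (Lr (Suc r))"
      then obtain k where k: "k < 2^Suc r" "ys = Lr (Suc r) ! k"
        by (metis in_set_conv_nth Lr_len)
      have kd: "k div 2 < 2^r" using k(1) by simp
      have "Lr r ! (k div 2) \<in> signvecs r"
        unfolding Suc[symmetric] using kd by (metis nth_mem Lr_len)
      then show "ys \<in> signvecs (Suc r)"
        unfolding k(2) Lr_nth[OF k(1)] signvecs_def by auto
    qed
  next
    show "signvecs (Suc r) \<subseteq> set (Lr (Suc r))"
    proof
      fix ys assume "ys \<in> signvecs (Suc r)"
      then obtain xs e where ys: "ys = xs @ [e]" "xs \<in> set (Lr r)" "e \<in> {-1,1}"
        unfolding signvecs_Suc Suc[symmetric] by blast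
      then obtain a where a: "a < 2^r" "xs = Lr r ! a" by (metis in_set_conv_nth Lr_len)
      define k where "k = (if e = -1 then 2*a else 2*a+1)"
      have k1: "k < 2^Suc r" using a(1) unfolding k_def by auto
      have "k div 2 = a" unfolding k_def by auto
      moreover have "(if even k then -1 else 1) = e" using ys(3) unfolding k_def by auto
      ultimately have "Lr (Suc r) ! k = ys" unfolding Lr_nth[OF k1] ys a by simp
      then show "ys \<in> set (Lr (Suc r))" using k1 by (metis nth_mem Lr_len)
    qed
  qed
qed

lemma app_less: "(xs::int list) < ys \<Longrightarrow> length xs = length ys \<Longrightarrow> xs @ [a] < ys @ [b]"
  unfolding list_less_def by (rule lexord_sufI) auto

lemma Lr_sorted: "sorted_wrt (<) (Lr r)"
proof (induction r)
  case 0 then show ?case by simp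
next
  case (Suc r)
  have len: "\<And>xs. xs \<in> set (Lr r) \<Longrightarrow> length xs = r" using Lr_set signvecs_def by auto
  show ?case unfolding sorted_wrt_iff_nth_less
  proof (intro allI impI)
    fix i j assume ij: "i < j" "j < length (Lr (Suc r))"
    hence j: "j < 2^Suc r" and i: "i < 2^Suc r" by (auto simp: Lr_len)
    have jd: "j div 2 < 2^r" using j by auto
    have id: "i div 2 < 2^r" using i by auto
    have ei: "Lr (Suc r) ! i = Lr r ! (i div 2) @ [if even i then -1 else 1]" by (rule Lr_nth[OF i])
    have ej: "Lr (Suc r) ! j = Lr r ! (j div 2) @ [if even j then -1 else 1]" by (rule Lr_nth[OF j])
    show "Lr (Suc r) ! i < Lr (Suc r) ! j"
    proof (cases "i div 2 < j div 2")
      case True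
      then have "Lr r ! (i div 2) < Lr r ! (j div 2)"
        using sorted_wrt_nth_less[OF Suc.IH True] jd by (simp add: Lr_len)
      then show ?thesis unfolding ei ej by (rule app_less) (use len jd id in \<open>auto simp: Lr_len\<close>)
    next
      case False
      then have "i div 2 = j div 2" using ij by (simp add: div_le_mono le_neq_implies_less)
      moreover have "i = 2*(i div 2) + i mod 2" "j = 2*(j div 2) + j mod 2" by simp_all
      moreover have "i mod 2 < 2" "j mod 2 < 2" by simp_all
      ultimately have "i mod 2 = 0" "j mod 2 = 1" using ij(1) by linarith+
      then have "even i" "odd j" by (simp_all add: even_iff_mod_2_eq_zero odd_iff_mod_2_eq_one)
      then have eq: "Lr (Suc r) ! i = Lr r ! (j div 2) @ [-1]" "Lr (Suc r) ! j = Lr r ! (j div 2) @ [1]"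
        using ei ej \<open>i div 2 = j div 2\<close> by simp_all
      have "([-1], [1]) \<in> lexord {(u, v::int). u < v}" by simp
      then show ?thesis unfolding eq list_less_def by (rule lexord_append_leftI)
    qed
  qed
qed

lemma sv_Lr: "sv r j = Lr r ! (j - 1)"
proof -
  have fin: "finite (signvecs r)" unfolding Lr_set[symmetric] by simp
  have s1: "sorted_wrt (<) (sorted_list_of_set (signvecs r))"
    using sorted_list_of_set.strict_sorted_key_list_of_set[of "signvecs r"] by simp
  have s2: "set (sorted_list_of_set (signvecs r)) = set (Lr r)"
    using fin by (simp add: Lr_set)
  have "sorted_list_of_set (signvecs r) = Lr r"
    by (rule strict_sorted_equal[OF Lr_sorted s1 s2])
  then show ?thesis by (simp add: sv_def)
qed
definition gs :: "real \<Rightarrow> real \<Rightarrow> real" where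
  "gs t x = sin (t * arccos x) / t"

lemma sqrt_pos: "-1 < x \<Longrightarrow> x < (1::real) \<Longrightarrow> sqrt (1 - x^2) > 0"
  by (simp add: abs_square_less_1)

lemma chebS_gs:
  assumes "-1 < x" "x < 1"
  shows "chebS m x = gs (real m) x"
proof (cases "m = 0")
  case True then show ?thesis by (simp add: chebS_def gs_def)
next
  case False
  have s: "sqrt (1 - x^2) > 0" using assms by (rule sqrt_pos)
  have "(cheb m has_real_derivative
          - sin (real m * arccos x) * (real m * inverse (- sqrt (1 - x^2)))) (at x)"
    unfolding cheb_def[abs_def]
    by (intro derivative_eq_intros DERIV_arccos assms) auto
  then have "deriv (cheb m) x = - sin (real m * arccos x) * (real m * inverse (- sqrt (1 - x^2)))"
    by (rule DERIV_imp_deriv)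
  then show ?thesis using s False
    by (simp add: chebS_def gs_def field_simps power2_eq_square)
qed

lemma gs_deriv:
  assumes "-1 < x" "x < 1" "t \<noteq> 0"
  shows "(gs t has_real_derivative - cos (t * arccos x) / sqrt (1 - x^2)) (at x)"
proof -
  have s: "sqrt (1 - x^2) > 0" using assms by (intro sqrt_pos)
  have "(gs t has_real_derivative
          cos (t * arccos x) * (t * inverse (- sqrt (1 - x^2))) / t) (at x)"
    unfolding gs_def[abs_def]
    by (intro derivative_eq_intros DERIV_arccos assms) auto
  then show ?thesis using assms s by (simp add: field_simps)
qed

lemma gs_rec:
  assumes "-1 < x" "x < 1" "M \<ge> 2"
  shows "((\<lambda>y. (gs (M+1) y - gs (M-1) y) / (2*M)) has_real_derivative gs M x) (at x)"
proof -
  have s: "sqrt (1 - x^2) > 0" using assms by (intro sqrt_pos)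
  define th where "th = arccos x"
  have st: "sin th = sqrt (1 - x^2)" unfolding th_def using assms by (simp add: sin_arccos)
  have "((\<lambda>y. (gs (M+1) y - gs (M-1) y) / (2*M)) has_real_derivative
         (- cos ((M+1) * th) / sqrt (1 - x^2) - (- cos ((M-1) * th) / sqrt (1 - x^2))) / (2*M)) (at x)"
    unfolding th_def using assms
    by (intro DERIV_cdivide DERIV_diff gs_deriv) auto
  moreover have "(- cos ((M+1) * th) / sqrt (1 - x^2) - (- cos ((M-1) * th) / sqrt (1 - x^2))) / (2*M)
      = gs M x"
  proof -
    have "cos ((M-1) * th) - cos ((M+1) * th) = 2 * sin (M*th) * sin th"
      by (simp add: algebra_simps cos_add cos_diff)
    then show ?thesis using s assms unfolding gs_def th_def[symmetric] st[symmetric]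
      by (simp add: field_simps)
  qed
  ultimately show ?thesis by simp
qed

lemma deriv_funpow_local:
  assumes "open S" "\<And>x. x \<in> S \<Longrightarrow> f x = g x" "x \<in> S"
  shows "(deriv ^^ k) f x = (deriv ^^ k) g (x::real)"
  using assms(3)
proof (induction k arbitrary: x)
  case 0 then show ?case using assms by simp
next
  case (Suc k)
  have "eventually (\<lambda>y. y \<in> S) (nhds x)" using assms(1) Suc.prems eventually_nhds_in_open by blast
  then have "eventually (\<lambda>y. (deriv ^^ k) f y = (deriv ^^ k) g y) (nhds x)"
    by (rule eventually_mono) (use Suc.IH in auto)
  then show ?case by (simp add: deriv_cong_ev)
qed


lemma beta_snoc: "beta n (xs @ [e]) = beta n xs * (2 * of_int (int n + sum_list xs))"
proof -
  have m: "2 * of_int (mseq n (xs @ [e]) (i - 1)) = (2 * of_int (mseq n xs (i - 1)) :: real)" if "i \<in> {1..length xs}" for i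
    using that unfolding mseq_def by (auto intro!: sum.cong simp: nth_append)
  have l: "mseq n (xs @ [e]) (length xs) = int n + sum_list xs"
    unfolding mseq_def by (simp add: sum_list_sum_nth lessThan_atLeast0 nth_append)
  have "beta n (xs @ [e]) = (\<Prod>i=1..Suc (length xs). 2 * of_int (mseq n (xs @ [e]) (i - 1)))"
    by (simp add: beta_def)
  also have "\<dots> = (\<Prod>i=1..length xs. 2 * of_int (mseq n (xs @ [e]) (i - 1))) * (2 * of_int (mseq n (xs @ [e]) (length xs)))"
    by (subst prod.nat_ivl_Suc') (auto simp: mult.commute)
  also have "\<dots> = beta n xs * (2 * of_int (int n + sum_list xs))"
    unfolding beta_def l by (simp only: prod.cong[OF refl m])
  finally show ?thesis .
qed

lemma pair_alg: "(p::real) * (-1) * g1 / (b * (2*M)) + p * 1 * g2 / (b*(2*M)) = p / b * ((g2 - g1)/(2*M))"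
  by (cases "b = 0"; cases "M = 0") (simp_all add: field_simps)

lemma rep_snoc: "replicate (Suc r) a = replicate r a @ [a]"
  by (simp add: replicate_append_same)

lemma beta_Nil: "beta n [] = 1" by (simp add: beta_def)

lemma signvecs_sum: "xs \<in> signvecs r \<Longrightarrow> - int r \<le> sum_list xs \<and> sum_list xs \<le> int r"
proof (induction xs arbitrary: r)
  case Nil then show ?case by (simp add: signvecs_def)
next
  case (Cons a xs)
  then obtain r' where "r = Suc r'" "xs \<in> signvecs r'" "a \<in> {-1,1}"
    by (auto simp: signvecs_def)
  with Cons.IH[of r'] show ?case by auto
qed

lemma sum_pairs: "(\<Sum>k<2*N. g k) = (\<Sum>a<N. g (2*a) + g (2*a+1)) " for g :: "nat \<Rightarrow> real"
  by (induction N) (auto simp: sum.distrib)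

definition Fg :: "nat \<Rightarrow> int list \<Rightarrow> real \<Rightarrow> real" where
  "Fg n xs y = of_int (prod_list xs) * gs (of_int (int n + sum_list xs)) y / beta n xs"

definition H :: "nat \<Rightarrow> nat \<Rightarrow> real \<Rightarrow> real" where
  "H n r y = (\<Sum>k<2^r. Fg n (Lr r ! k) y)"

lemma Fg_snoc: "Fg n (xs @ [e]) y = of_int (prod_list xs) * of_int e * gs (of_int (int n + sum_list xs) + of_int e) y / (beta n xs * (2 * of_int (int n + sum_list xs)))"
  by (simp add: Fg_def beta_snoc add_ac)

lemma Lr_mem: "k < 2^r \<Longrightarrow> Lr r ! k \<in> signvecs r"
  using Lr_set Lr_len nth_mem by metis

lemma H_deriv:
  assumes "-1 < x" "x < 1" "Suc (Suc r) \<le> n"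
  shows "(H n (Suc r) has_real_derivative H n r x) (at x)"
proof -
  define c where "c a = of_int (prod_list (Lr r ! a)) / beta n (Lr r ! a)" for a
  define M where "M a = (of_int (int n + sum_list (Lr r ! a)) :: real)" for a
  have eq: "H n (Suc r) = (\<lambda>y. \<Sum>a<2^r. c a * ((gs (M a + 1) y - gs (M a - 1) y) / (2 * M a)))"
  proof
    fix y
    have "H n (Suc r) y = (\<Sum>a<2^r. Fg n (Lr (Suc r) ! (2*a)) y + Fg n (Lr (Suc r) ! (2*a+1)) y)"
      unfolding H_def power_Suc by (rule sum_pairs)
    also have "\<dots> = (\<Sum>a<2^r. c a * ((gs (M a + 1) y - gs (M a - 1) y) / (2 * M a)))"
    proof (rule sum.cong[OF refl])
      fix a assume "a \<in> {..<(2::nat)^r}"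
      then have a1: "2*a < 2^Suc r" "2*a+1 < 2^Suc r" by auto
      show "Fg n (Lr (Suc r) ! (2*a)) y + Fg n (Lr (Suc r) ! (2*a+1)) y =
            c a * ((gs (M a + 1) y - gs (M a - 1) y) / (2 * M a))"
        unfolding Lr_nth[OF a1(1)] Lr_nth[OF a1(2)] Fg_snoc c_def M_def
        by (simp add: right_diff_distrib diff_divide_distrib)
    qed
    finally show "H n (Suc r) y = (\<Sum>a<2^r. c a * ((gs (M a + 1) y - gs (M a - 1) y) / (2 * M a)))" .
  qed
  have "((\<lambda>y. \<Sum>a<2^r. c a * ((gs (M a + 1) y - gs (M a - 1) y) / (2 * M a)))
        has_real_derivative (\<Sum>a<2^r. c a * gs (M a) x)) (at x)"
  proof (intro DERIV_sum DERIV_cmult gs_rec assms)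
    fix a assume "a \<in> {..<(2::nat)^r}"
    then have "Lr r ! a \<in> signvecs r" by (intro Lr_mem) auto
    from signvecs_sum[OF this] assms show "2 \<le> M a" unfolding M_def by linarith
  qed
  moreover have "(\<Sum>a<2^r. c a * gs (M a) x) = H n r x"
    unfolding H_def Fg_def c_def M_def by simp
  ultimately show ?thesis unfolding eq by simp
qed

lemma main_ind:
  assumes "Suc r \<le> n" "-1 < x" "x < 1"
  shows "(deriv ^^ r) (H n r) x = gs (real n) x"
  using assms
proof (induction r arbitrary: x)
  case 0
  then show ?case by (simp add: H_def Fg_def beta_Nil)
next
  case (Suc r)
  have "(deriv ^^ Suc r) (H n (Suc r)) x = (deriv ^^ r) (deriv (H n (Suc r))) x"
    by (simp add: funpow_Suc_right del: funpow.simps)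
  also have "\<dots> = (deriv ^^ r) (H n r) x"
    by (rule deriv_funpow_local[where S="{-1<..<1}"])
       (use Suc.prems in \<open>auto intro!: DERIV_imp_deriv H_deriv\<close>)
  also have "\<dots> = gs (real n) x" using Suc by simp
  finally show ?case .
qed

lemma Lr_first: "Lr r ! 0 = replicate r (-1)"
  by (induction r) (auto simp: Lr_nth replicate_append_same)

lemma Lr_last: "Lr r ! (2^r - 1) = replicate r 1"
proof (induction r)
  case 0 then show ?case by simp
next
  case (Suc r)
  have "(2::nat)^Suc r - 1 < 2^Suc r" by simp
  moreover have "((2::nat)^Suc r - 1) div 2 = 2^r - 1" by (simp add: nat_mult_div_cancel1 div_Suc)
  moreover have "odd ((2::nat)^Suc r - 1)" by simp
  ultimately show ?case using Suc by (simp add: Lr_nth replicate_append_same)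
qed

lemma beta_rep_minus: "beta n (replicate r (-1)) = (\<Prod>i=1..r. 2 * real n - 2 * real i + 2)"
proof (induction r)
  case 0 then show ?case by (simp add: beta_Nil)
next
  case (Suc r)
  show ?case unfolding rep_snoc beta_snoc Suc
    by (simp add: prod.nat_ivl_Suc' algebra_simps sum_list_replicate)
qed

lemma beta_rep_plus: "beta n (replicate r 1) = (\<Prod>i=1..r. 2 * real n + 2 * real i - 2)"
proof (induction r)
  case 0 then show ?case by (simp add: beta_Nil)
next
  case (Suc r)
  show ?case unfolding rep_snoc beta_snoc Suc
    by (simp add: prod.nat_ivl_Suc' algebra_simps sum_list_replicate)
qed

lemma beta_bounds:
  assumes "xs \<in> signvecs r" "r \<le> n"
  shows "(\<Prod>i=1..r. 2 * real n - 2 * real i + 2) \<le> beta n xs \<and> beta n xs \<le> (\<Prod>i=1..r. 2 * real n + 2 * real i - 2)"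
  using assms
proof (induction r arbitrary: xs)
  case 0 then show ?case by (simp add: signvecs_def beta_Nil)
next
  case (Suc r)
  then obtain ys e where ys: "xs = ys @ [e]" "ys \<in> signvecs r" unfolding signvecs_Suc by blast
  have IH: "(\<Prod>i=1..r. 2 * real n - 2 * real i + 2) \<le> beta n ys" "beta n ys \<le> (\<Prod>i=1..r. 2 * real n + 2 * real i - 2)"
    using Suc ys by auto
  have sb: "- int r \<le> sum_list ys" "sum_list ys \<le> int r" using signvecs_sum[OF ys(2)] by auto
  have p0: "0 \<le> (\<Prod>i=1..r. 2 * real n - 2 * real i + 2)"
    using Suc.prems(2) by (intro prod_nonneg) auto
  have "(\<Prod>i=1..Suc r. 2 * real n - 2 * real i + 2) = (\<Prod>i=1..r. 2 * real n - 2 * real i + 2) * (2 * real n - 2 * real r)"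
    by (simp add: prod.nat_ivl_Suc' algebra_simps)
  also have "\<dots> \<le> beta n ys * (2 * of_int (int n + sum_list ys))"
    using IH(1) p0 sb Suc.prems(2) by (intro mult_mono) auto
  finally have 1: "(\<Prod>i=1..Suc r. 2 * real n - 2 * real i + 2) \<le> beta n xs" unfolding ys beta_snoc .
  have "beta n ys * (2 * of_int (int n + sum_list ys)) \<le> (\<Prod>i=1..r. 2 * real n + 2 * real i - 2) * (2 * real n + 2 * real r)"
    using IH p0 sb Suc.prems(2) by (intro mult_mono) auto
  also have "\<dots> = (\<Prod>i=1..Suc r. 2 * real n + 2 * real i - 2)"
    by (simp add: prod.nat_ivl_Suc' algebra_simps)
  finally have 2: "beta n xs \<le> (\<Prod>i=1..Suc r. 2 * real n + 2 * real i - 2)" unfolding ys beta_snoc .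
  from 1 2 show ?case ..
qed

lemma sum_shift1: "sum f {1..N} = (\<Sum>k<N. f (Suc k))" for f :: "nat \<Rightarrow> real"
proof -
  have "sum f {1..N} = sum f (Suc ` {..<N})" by (simp add: image_Suc_lessThan)
  also have "\<dots> = (\<Sum>k<N. f (Suc k))" by (subst sum.reindex) auto
  finally show ?thesis .
qed

theorem lemma1:
  fixes n r :: nat
  assumes "n \<ge> 2" and "1 \<le> r" and "r \<le> n - 1"
  shows "(\<forall>x::real. -1 < x \<and> x < 1 \<longrightarrow>
           chebS n x =
           (deriv ^^ r)
             (\<lambda>y. \<Sum>j=1..2^r. of_int (prod_list (sv r j)) *
                  chebS (nat (int n + sum_list (sv r j))) y / beta n (sv r j)) x)
       \<and> beta n (sv r 1) = beta n (sv r 2)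
       \<and> beta n (sv r 1) = (\<Prod>i=1..r. 2 * real n - 2 * real i + 2)
       \<and> beta n (sv r (2^r - 1)) = beta n (sv r (2^r))
       \<and> beta n (sv r (2^r)) = (\<Prod>i=1..r. 2 * real n + 2 * real i - 2)
       \<and> (\<forall>j. 1 \<le> j \<and> j \<le> 2^(r-1) \<longrightarrow>
            beta n (sv r (2*j - 1)) = beta n (sv r (2*j))
            \<and> beta n (sv r 1) \<le> beta n (sv r (2*j - 1))
            \<and> beta n (sv r (2*j)) \<le> beta n (sv r (2^r)))"
proof -
  obtain r' where r: "r = Suc r'" using assms(2) by (cases r) auto
  have rn: "Suc r \<le> n" using assms by linarith
  have part1: "chebS n x =
           (deriv ^^ r)
             (\<lambda>y. \<Sum>j=1..2^r. of_int (prod_list (sv r j)) *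
                  chebS (nat (int n + sum_list (sv r j))) y / beta n (sv r j)) x"
    if x: "-1 < x" "x < 1" for x
  proof -
    have feq: "(\<Sum>j=1..2^r. of_int (prod_list (sv r j)) *
                  chebS (nat (int n + sum_list (sv r j))) y / beta n (sv r j)) = H n r y"
      if y: "y \<in> {-1<..<1}" for y
    proof -
      have "(\<Sum>j=1..2^r. of_int (prod_list (sv r j)) *
                  chebS (nat (int n + sum_list (sv r j))) y / beta n (sv r j))
          = (\<Sum>k<2^r. of_int (prod_list (sv r (Suc k))) *
                  chebS (nat (int n + sum_list (sv r (Suc k)))) y / beta n (sv r (Suc k)))"
        by (rule sum_shift1)
      also have "\<dots> = H n r y" unfolding H_def
      proof (rule sum.cong[OF refl])
        fix k assume "k \<in> {..<(2::nat)^r}"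
        then have mem: "Lr r ! k \<in> signvecs r" by (intro Lr_mem) auto
        have nn: "0 \<le> int n + sum_list (Lr r ! k)" using signvecs_sum[OF mem] rn by linarith
        have "chebS (nat (int n + sum_list (Lr r ! k))) y = gs (real (nat (int n + sum_list (Lr r ! k)))) y"
          using y by (intro chebS_gs) auto
        also have "real (nat (int n + sum_list (Lr r ! k))) = of_int (int n + sum_list (Lr r ! k))"
          using nn by simp
        finally show "of_int (prod_list (sv r (Suc k))) *
                  chebS (nat (int n + sum_list (sv r (Suc k)))) y / beta n (sv r (Suc k)) = Fg n (Lr r ! k) y"
          unfolding sv_Lr Fg_def by simp
      qed
      finally show ?thesis .
    qed
    have "(deriv ^^ r)
             (\<lambda>y. \<Sum>j=1..2^r. of_int (prod_list (sv r j)) *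
                  chebS (nat (int n + sum_list (sv r j))) y / beta n (sv r j)) x = (deriv ^^ r) (H n r) x"
      by (rule deriv_funpow_local[where S="{-1<..<1}"]) (use feq x in auto)
    also have "\<dots> = gs (real n) x" by (rule main_ind[OF rn x])
    also have "\<dots> = chebS n x" using x by (simp add: chebS_gs)
    finally show ?thesis by simp
  qed
  have pair: "sv r (2*j - 1) = Lr r' ! (j-1) @ [-1] \<and> sv r (2*j) = Lr r' ! (j-1) @ [1]"
    if j: "1 \<le> j" "j \<le> 2^r'" for j
  proof -
    have k1: "2*j - 1 - 1 < 2^Suc r'" "2*j - 1 < 2^Suc r'" using j by auto
    have d1: "(2*j - 1 - 1) div 2 = j - 1" "even (2*j - 1 - 1)" using j by auto
    have d2: "(2*j - 1) div 2 = j - 1" "odd (2*j - 1)" using j by presburger+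
    show ?thesis unfolding sv_Lr r Lr_nth[OF k1(1)] Lr_nth[OF k1(2)] d1 d2
      using d1(2) d2(2) by simp
  qed
  have mem: "sv r j \<in> signvecs r" if "1 \<le> j" "j \<le> 2^r" for j
    unfolding sv_Lr using that by (intro Lr_mem) auto
  have first: "sv r 1 = replicate r (-1)" unfolding sv_Lr by (simp add: Lr_first)
  have last: "sv r (2^r) = replicate r 1" unfolding sv_Lr using Lr_last[of r] by simp
  have bpair: "beta n (sv r (2*j - 1)) = beta n (sv r (2*j))" if "1 \<le> j" "j \<le> 2^r'" for j
    using pair[OF that] by (simp add: beta_snoc)
  have b12: "beta n (sv r 1) = beta n (sv r 2)" using bpair[of 1] by simp
  have blast2: "beta n (sv r (2^r - 1)) = beta n (sv r (2^r))"
    using bpair[of "2^r'"] by (simp add: r)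
  have bb: "(\<Prod>i=1..r. 2 * real n - 2 * real i + 2) \<le> beta n (sv r j) \<and> beta n (sv r j) \<le> (\<Prod>i=1..r. 2 * real n + 2 * real i - 2)"
    if "1 \<le> j" "j \<le> 2^r" for j
    using beta_bounds[OF mem[OF that]] rn by simp
  have bfirst: "beta n (sv r 1) = (\<Prod>i=1..r. 2 * real n - 2 * real i + 2)"
    unfolding first by (rule beta_rep_minus)
  have blast: "beta n (sv r (2^r)) = (\<Prod>i=1..r. 2 * real n + 2 * real i - 2)"
    unfolding last by (rule beta_rep_plus)
  have rest: "beta n (sv r (2*j - 1)) = beta n (sv r (2*j))
            \<and> beta n (sv r 1) \<le> beta n (sv r (2*j - 1))
            \<and> beta n (sv r (2*j)) \<le> beta n (sv r (2^r))" if "1 \<le> j" "j \<le> 2^(r-1)" for j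
  proof -
    have j': "j \<le> 2^r'" using that r by simp
    have "2*j - 1 \<le> 2^r" "2*j \<le> 2^r" "1 \<le> 2*j - 1" using that r by auto
    then show ?thesis using bpair[OF that(1) j'] bb[of "2*j - 1"] bb[of "2*j"] bfirst blast that by auto
  qed
  show ?thesis using part1 b12 bfirst blast2 blast rest by blast
qed
end
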